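(* Let $0<s_1<1-s_1<s_2<1$. There is $\epsilon_0=\epsilon_0(s_1,s_2)>0$ such that for every $\epsilon\in(0,\epsilon_0)$ for which $m=\epsilon^{-1}/4$ is an integer there is $n_0$ with the following property: if $n\geq n_0$, $H\in Irr(m)$, and $G$ is an $n$-blowup of $H$, then every $\epsilon$-regular partition of $G$ has at least $\epsilon^{-s_2}$ parts.
   Context: Graphs $G=(V,E)$, $E\subseteq\binom V2$. $d_G(X,Y)=|\{(x,y)\in X\times Y:xy\in E\}|/(|X||Y|)$; $(X,Y)$ is $\epsilon$-regular if $|d_G(X,Y)-d_G(X',Y')|\le\epsilon$ for $X'\subseteq X,Y'\subseteq Y$ with $|X'|\ge\epsilon|X|,|Y'|\ge\epsilon|Y|$; a partition $\mathcal P$ of $V$ (not necessarily equitable; pairs $(X,X)$ allowed) is $\epsilon$-regular if at least $(1-\epsilon)|V|^2$ pairs of $V^2$ lie in $X\times Y$ for some $\epsilon$-regular $(X,Y)\in\mathcal P^2$. $Irr(m)$ is the set of graphs on $\{a_1,..,a_m,b_1,..,b_m\}$ ($2m$ distinct vertices) such that either $a_ib_j\in E$ iff $i\le j$ for all $i,j$, or $a_ib_j\in E$ iff $i=j$ for all $i,j$, or $a_ib_j\in E$ iff $i\ne j$ for all $i,j$. For a graph $H=(U,E)$, an $n$-blowup of $H$ is any graph with vertex set $\bigcup_{u\in U}V_u$ (disjoint, $|V_u|=n$) such that for $u\neq u'$, all pairs $xy$ with $x\in V_u,y\in V_{u'}$ are edges if $uu'\in E$ and non-edges if $uu'\notin E$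 (pairs inside a $V_u$ arbitrary). *)

theory Defs
  imports Complex_Main
begin

definition is_graph :: "'a set \<Rightarrow> 'a set set \<Rightarrow> bool" where
  "is_graph V E \<longleftrightarrow> finite V \<and> (\<forall>e\<in>E. \<exists>x y. x \<noteq> y \<and> x \<in> V \<and> y \<in> V \<and> e = {x, y})"

definition density :: "'a set set \<Rightarrow> 'a set \<Rightarrow> 'a set \<Rightarrow> real" where
  "density E X Y = real (card {(x, y). x \<in> X \<and> y \<in> Y \<and> {x, y} \<in> E}) / (real (card X) * real (card Y))"

definition regular_pair :: "'a set set \<Rightarrow> real \<Rightarrow> 'a set \<Rightarrow> 'a set \<Rightarrow> bool" where
  "regular_pair E eps X Y \<longleftrightarrow>
     (\<forall>X' Y'. X' \<subseteq> X \<and> Y' \<subseteq> Y \<and> real (card X') \<ge> eps * real (card X)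
        \<and> real (card Y') \<ge> eps * real (card Y)
        \<longrightarrow> \<bar>density E X Y - density E X' Y'\<bar> \<le> eps)"

definition is_partition :: "'a set \<Rightarrow> 'a set set \<Rightarrow> bool" where
  "is_partition V P \<longleftrightarrow> (\<forall>X\<in>P. X \<noteq> {}) \<and> \<Union>P = V \<and>
     (\<forall>X\<in>P. \<forall>Y\<in>P. X \<noteq> Y \<longrightarrow> X \<inter> Y = {})"

definition regular_partition :: "'a set \<Rightarrow> 'a set set \<Rightarrow> real \<Rightarrow> 'a set set \<Rightarrow> bool" where
  "regular_partition V E eps P \<longleftrightarrow> is_partition V P \<and>
     real (card {(x, y). x \<in> V \<and> y \<in> V \<and>
        (\<exists>X\<in>P. \<exists>Y\<in>P. x \<in> X \<and> y \<in> Y \<and> regular_pair E eps X Y)})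
       \<ge> (1 - eps) * real (card V) ^ 2"

text \<open>The graphs of Irr(m) live on the vertex set {a_1..a_m, b_1..b_m}, where
  a_i is represented by Inl i and b_i by Inr i.\<close>
definition irr_vertices :: "nat \<Rightarrow> (nat + nat) set" where
  "irr_vertices m = Inl ` {1..m} \<union> Inr ` {1..m}"

definition Irr :: "nat \<Rightarrow> (nat + nat) set set set" where
  "Irr m = {EH. is_graph (irr_vertices m) EH \<and>
     ((\<forall>i\<in>{1..m}. \<forall>j\<in>{1..m}. {Inl i, Inr j} \<in> EH \<longleftrightarrow> i \<le> j) \<or>
      (\<forall>i\<in>{1..m}. \<forall>j\<in>{1..m}. {Inl i, Inr j} \<in> EH \<longleftrightarrow> i = j) \<or>
      (\<forall>i\<in>{1..m}. \<forall>j\<in>{1..m}. {Inl i, Inr j} \<in> EH \<longleftrightarrow> i \<noteq> j))}"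

definition is_blowup :: "nat \<Rightarrow> 'u set \<Rightarrow> 'u set set \<Rightarrow> 'v set \<Rightarrow> 'v set set \<Rightarrow> bool" where
  "is_blowup n U EH V E \<longleftrightarrow> is_graph V E \<and>
     (\<exists>part :: 'u \<Rightarrow> 'v set.
        (\<forall>u\<in>U. card (part u) = n) \<and>
        (\<forall>u\<in>U. \<forall>u'\<in>U. u \<noteq> u' \<longrightarrow> part u \<inter> part u' = {}) \<and>
        V = (\<Union>u\<in>U. part u) \<and>
        (\<forall>u\<in>U. \<forall>u'\<in>U. u \<noteq> u' \<longrightarrow>
           (\<forall>x\<in>part u. \<forall>y\<in>part u'. {x, y} \<in> E \<longleftrightarrow> {u, u'} \<in> EH)))"

end

theory Submission
  imports Defs
begin

lemma quant:
  fixes a b :: "nat \<Rightarrow> real" and m :: nat and n \<alpha> \<beta> :: real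
  assumes ab: "\<forall>i\<in>{1..m}. 0 \<le> a i \<and> a i \<le> n \<and> 0 \<le> b i \<and> b i \<le> n"
    and al: "0 < \<alpha>" and be: "0 \<le> \<beta>" and n0: "0 \<le> n"
    and nw: "\<not>(\<exists>h\<in>{1..m}. \<exists>l\<in>{1..m}. l < h \<and> \<alpha> \<le> (\<Sum>i=h..m. a i) \<and> \<beta> \<le> (\<Sum>j=1..l. b j))"
  shows "(\<Sum>i=1..m. a i * b i) \<le> n*\<alpha> + n*\<beta> +
     (if (\<exists>h\<in>{1..m}. \<alpha> \<le> (\<Sum>i=h..m. a i))
      then a (GREATEST h. h\<in>{1..m} \<and> \<alpha> \<le> (\<Sum>i=h..m. a i)) * b (GREATEST h. h\<in>{1..m} \<and> \<alpha> \<le> (\<Sum>i=h..m. a i))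
      else 0)"
proof (cases "\<exists>h\<in>{1..m}. \<alpha> \<le> (\<Sum>i=h..m. a i)")
  case False
  have s: "(\<Sum>i=1..m. a i) < \<alpha>"
  proof (cases "m \<ge> 1")
    case True then have "1 \<in> {1..m}" by simp
    then show ?thesis using False by (meson not_le)
  next
    case False then show ?thesis using al by simp
  qed
  have "(\<Sum>i=1..m. a i * b i) \<le> (\<Sum>i=1..m. a i * n)"
    by (rule sum_mono) (use ab in \<open>auto intro: mult_left_mono\<close>)
  also have "\<dots> = n * (\<Sum>i=1..m. a i)" by (simp add: sum_distrib_left mult.commute)
  also have "\<dots> \<le> n * \<alpha>" using s n0 by (simp add: mult_left_mono)
  finally have "(\<Sum>i=1..m. a i * b i) \<le> n * \<alpha>" .
  moreover have "0 \<le> n * \<beta>" using n0 be by simp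
  ultimately show ?thesis using False by simp
next
  case True
  define h where "h = (GREATEST h. h\<in>{1..m} \<and> \<alpha> \<le> (\<Sum>i=h..m. a i))"
  have ex: "\<exists>k. k\<in>{1..m} \<and> \<alpha> \<le> (\<Sum>i=k..m. a i)" using True by blast
  have bnd: "\<And>y. y\<in>{1..m} \<and> \<alpha> \<le> (\<Sum>i=y..m. a i) \<Longrightarrow> y \<le> m" by simp
  have hP: "h\<in>{1..m} \<and> \<alpha> \<le> (\<Sum>i=h..m. a i)"
    unfolding h_def by (rule GreatestI_ex_nat[OF ex bnd])
  have hmax: "\<And>h'. h'\<in>{1..m} \<Longrightarrow> \<alpha> \<le> (\<Sum>i=h'..m. a i) \<Longrightarrow> h' \<le> h"
    unfolding h_def by (rule Greatest_le_nat[OF _ bnd]) simp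
  have up: "(\<Sum>i=Suc h..m. a i) < \<alpha>"
  proof (cases "h = m")
    case True then show ?thesis using al by simp
  next
    case False
    then have "Suc h \<in> {1..m}" using hP by auto
    then have "\<not> \<alpha> \<le> (\<Sum>i=Suc h..m. a i)" using hmax[of "Suc h"] by fastforce
    then show ?thesis by simp
  qed
  have low: "(\<Sum>j=1..h-1. b j) \<le> \<beta>"
  proof (cases "h \<ge> 2")
    case True
    then have "h - 1 \<in> {1..m}" "h - 1 < h" using hP by auto
    then have "\<not> (\<alpha> \<le> (\<Sum>i=h..m. a i) \<and> \<beta> \<le> (\<Sum>j=1..h-1. b j))" using nw hP by blast
    then show ?thesis using hP by simp
  next
    case False then have "h - 1 < 1" by simp
    then show ?thesis using be by simp
  qed
  have d1: "({1..h-1} \<union> {h}) \<inter> {Suc h..m} = {}" by auto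
  have d2: "{1..h-1} \<inter> {h} = {}" using hP by auto
  have split: "{1..m} = ({1..h-1} \<union> {h}) \<union> {Suc h..m}" using hP by auto
  have "(\<Sum>i=1..m. a i * b i) = (\<Sum>i=1..h-1. a i * b i) + a h * b h + (\<Sum>i=Suc h..m. a i * b i)"
  proof -
    have "(\<Sum>i=1..m. a i * b i) = (\<Sum>i\<in>({1..h-1} \<union> {h}) \<union> {Suc h..m}. a i * b i)"
      by (rule arg_cong[OF split])
    also have "\<dots> = (\<Sum>i\<in>{1..h-1} \<union> {h}. a i * b i) + (\<Sum>i=Suc h..m. a i * b i)"
      by (rule sum.union_disjoint[OF _ _ d1]) simp_all
    also have "(\<Sum>i\<in>{1..h-1} \<union> {h}. a i * b i) = (\<Sum>i=1..h-1. a i * b i) + (\<Sum>i\<in>{h}. a i * b i)"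
      by (rule sum.union_disjoint[OF _ _ d2]) simp_all
    finally show ?thesis by simp
  qed
  also have "(\<Sum>i=1..h-1. a i * b i) \<le> (\<Sum>i=1..h-1. n * b i)"
    by (rule sum_mono) (use ab hP in \<open>auto intro: mult_right_mono\<close>)
  also have "\<dots> = n * (\<Sum>j=1..h-1. b j)" by (simp add: sum_distrib_left)
  also have "\<dots> \<le> n * \<beta>" using low n0 by (simp add: mult_left_mono)
  also have "(\<Sum>i=Suc h..m. a i * b i) \<le> (\<Sum>i=Suc h..m. a i * n)"
    by (rule sum_mono) (use ab hP in \<open>auto intro: mult_left_mono\<close>)
  also have "\<dots> = n * (\<Sum>i=Suc h..m. a i)" by (simp add: sum_distrib_left mult.commute)
  also have "\<dots> \<le> n * \<alpha>" using up n0 by (simp add: mult_left_mono)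
  finally show ?thesis using True unfolding h_def by simp
qed


lemma density_sym: "density E X Y = density E Y X"
proof -
  have "{(x, y). x \<in> Y \<and> y \<in> X \<and> {x, y} \<in> E} = prod.swap ` {(x, y). x \<in> X \<and> y \<in> Y \<and> {x, y} \<in> E}"
    by (auto simp: insert_commute image_iff)
  then have "card {(x, y). x \<in> Y \<and> y \<in> X \<and> {x, y} \<in> E} = card {(x, y). x \<in> X \<and> y \<in> Y \<and> {x, y} \<in> E}"
    by (simp add: card_image)
  then show ?thesis unfolding density_def by (simp add: mult.commute)
qed

lemma regular_pair_sym: "regular_pair E eps X Y \<Longrightarrow> regular_pair E eps Y X"
  unfolding regular_pair_def by (metis density_sym)

locale blow =
  fixes m n :: nat and eps :: real and part :: "nat + nat \<Rightarrow> 'v set" and V :: "'v set"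
    and E :: "'v set set" and EH :: "(nat + nat) set set" and P :: "'v set set" and tau :: bool
  assumes m1: "m \<ge> 1" and epsm: "4 * eps * real m = 1" and n1: "n \<ge> 1"
    and card_part: "\<forall>u\<in>irr_vertices m. card (part u) = n"
    and disj: "\<forall>u\<in>irr_vertices m. \<forall>u'\<in>irr_vertices m. u \<noteq> u' \<longrightarrow> part u \<inter> part u' = {}"
    and Vdef: "V = (\<Union>u\<in>irr_vertices m. part u)"
    and edges: "\<forall>u\<in>irr_vertices m. \<forall>u'\<in>irr_vertices m. u \<noteq> u' \<longrightarrow>
           (\<forall>x\<in>part u. \<forall>y\<in>part u'. {x, y} \<in> E \<longleftrightarrow> {u, u'} \<in> EH)"
    and tauprop: "\<forall>i\<in>{1..m}. \<forall>j\<in>{1..m}. (i = j \<longrightarrow> ({Inl i, Inr j} \<in> EH \<longleftrightarrow> tau))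
          \<and> (j < i \<longrightarrow> ({Inl i, Inr j} \<in> EH \<longleftrightarrow> \<not> tau))"
    and regp: "regular_partition V E eps P"
begin

definition "A i = part (Inl i)"
definition "B i = part (Inr i)"
definition "a X i = real (card (X \<inter> A i))"
definition "b X i = real (card (X \<inter> B i))"
definition "c X = real (card X)"
definition "D X Y = (\<Sum>i=1..m. a X i * b Y i + b X i * a Y i)"
definition "Qs X Y = {(x, y). x \<in> X \<and> y \<in> Y \<and> ({x, y} \<in> E \<longleftrightarrow> tau)}"
definition "R X Y = regular_pair E eps X Y"
definition "hex X = (\<exists>h\<in>{1..m}. eps * c X \<le> (\<Sum>i=h..m. a X i))"
definition "hq X = (GREATEST h. h\<in>{1..m} \<and> eps * c X \<le> (\<Sum>i=h..m. a X i))"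
definition "e X Y = (if hex X then a X (hq X) * b Y (hq X) else 0)"

lemma eps_pos: "eps > 0"
proof -
  have "real m > 0" using m1 by simp
  show ?thesis
  proof (rule ccontr)
    assume "\<not> eps > 0"
    then have "4 * eps * real m \<le> 0" using \<open>real m > 0\<close> by (simp add: mult_nonpos_nonneg)
    then show False using epsm by simp
  qed
qed

lemma partn: "is_partition V P" using regp unfolding regular_partition_def by simp

lemma inU: "i \<in> {1..m} \<Longrightarrow> Inl i \<in> irr_vertices m" "i \<in> {1..m} \<Longrightarrow> Inr i \<in> irr_vertices m"
  unfolding irr_vertices_def by auto

lemma finU: "finite (irr_vertices m)" unfolding irr_vertices_def by simp

lemma cardU: "card (irr_vertices m) = 2 * m"
proof -
  have "card (Inl ` {1..m} \<union> Inr ` {1..m} :: (nat+nat) set) = card (Inl ` {1..m} :: (nat+nat) set) + card (Inr ` {1..m} :: (nat+nat) set)"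
    by (rule card_Un_disjoint) auto
  also have "\<dots> = m + m" by (simp add: card_image)
  finally show ?thesis unfolding irr_vertices_def by simp
qed

lemma fin_part: "u \<in> irr_vertices m \<Longrightarrow> finite (part u)"
  using card_part n1 by (metis card.infinite not_one_le_zero)

lemma finV: "finite V" unfolding Vdef using finU fin_part by blast

lemma cardV: "card V = 2 * m * n"
proof -
  have "card V = (\<Sum>u\<in>irr_vertices m. card (part u))"
    unfolding Vdef by (rule card_UN_disjoint) (use finU fin_part disj in auto)
  also have "\<dots> = 2 * m * n" using card_part cardU by simp
  finally show ?thesis .
qed

lemma P_sub: "X \<in> P \<Longrightarrow> X \<subseteq> V" using partn unfolding is_partition_def by auto
lemma P_ne: "X \<in> P \<Longrightarrow> X \<noteq> {}" using partn unfolding is_partition_def by auto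
lemma P_fin: "X \<in> P \<Longrightarrow> finite X" using P_sub finV finite_subset by blast
lemma P_disj: "X \<in> P \<Longrightarrow> Y \<in> P \<Longrightarrow> X \<noteq> Y \<Longrightarrow> X \<inter> Y = {}" using partn unfolding is_partition_def by auto
lemma P_union: "\<Union>P = V" using partn unfolding is_partition_def by auto
lemma finP: "finite P" using P_sub finV by (meson Pow_iff finite_Pow_iff rev_finite_subset subsetI)

lemma c_pos: "X \<in> P \<Longrightarrow> c X > 0" unfolding c_def using P_ne P_fin by (simp add: card_gt_0_iff)

lemma sumP: "S \<subseteq> V \<Longrightarrow> (\<Sum>X\<in>P. card (X \<inter> S)) = card S"
proof -
  assume S: "S \<subseteq> V"
  have "S = (\<Union>X\<in>P. X \<inter> S)" using S P_union by auto
  moreover have "card (\<Union>X\<in>P. X \<inter> S) = (\<Sum>X\<in>P. card (X \<inter> S))"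
    by (rule card_UN_disjoint) (use finP P_fin P_disj in auto)
  ultimately show ?thesis by simp
qed

lemma A_props: "i \<in> {1..m} \<Longrightarrow> A i \<subseteq> V \<and> card (A i) = n \<and> finite (A i)"
  unfolding A_def using inU card_part fin_part Vdef by auto
lemma B_props: "i \<in> {1..m} \<Longrightarrow> B i \<subseteq> V \<and> card (B i) = n \<and> finite (B i)"
  unfolding B_def using inU card_part fin_part Vdef by auto

lemma AA_disj: "i \<in> {1..m} \<Longrightarrow> j \<in> {1..m} \<Longrightarrow> i \<noteq> j \<Longrightarrow> A i \<inter> A j = {}"
  unfolding A_def using disj inU by blast
lemma BB_disj: "i \<in> {1..m} \<Longrightarrow> j \<in> {1..m} \<Longrightarrow> i \<noteq> j \<Longrightarrow> B i \<inter> B j = {}"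
  unfolding B_def using disj inU by blast
lemma AB_disj: "i \<in> {1..m} \<Longrightarrow> j \<in> {1..m} \<Longrightarrow> A i \<inter> B j = {}"
  unfolding A_def B_def using disj inU by blast

lemma edgeAB: "i \<in> {1..m} \<Longrightarrow> j \<in> {1..m} \<Longrightarrow> x \<in> A i \<Longrightarrow> y \<in> B j \<Longrightarrow> ({x, y} \<in> E \<longleftrightarrow> {Inl i, Inr j} \<in> EH)"
  unfolding A_def B_def using edges inU by blast

lemma a_nonneg: "0 \<le> a X i" unfolding a_def by simp
lemma b_nonneg: "0 \<le> b X i" unfolding b_def by simp
lemma a_le: "i \<in> {1..m} \<Longrightarrow> a X i \<le> n"
  unfolding a_def using A_props by (metis Int_lower2 card_mono of_nat_le_iff)
lemma b_le: "i \<in> {1..m} \<Longrightarrow> b X i \<le> n"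
  unfolding b_def using B_props by (metis Int_lower2 card_mono of_nat_le_iff)

lemma sum_a: "i \<in> {1..m} \<Longrightarrow> (\<Sum>X\<in>P. a X i) = n"
  unfolding a_def using sumP A_props by (metis of_nat_eq_iff of_nat_sum)
lemma sum_b: "i \<in> {1..m} \<Longrightarrow> (\<Sum>X\<in>P. b X i) = n"
  unfolding b_def using sumP B_props by (metis of_nat_eq_iff of_nat_sum)
lemma sum_c: "(\<Sum>X\<in>P. c X) = 2 * real m * real n"
proof -
  have "(\<Sum>X\<in>P. card (X \<inter> V)) = card V" by (rule sumP) simp
  moreover have "\<And>X. X \<in> P \<Longrightarrow> X \<inter> V = X" using P_sub by blast
  ultimately have "(\<Sum>X\<in>P. card X) = 2 * m * n" using cardV by simp
  then show ?thesis unfolding c_def by (metis of_nat_mult of_nat_numeral of_nat_sum)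
qed

lemma cardUA: "S \<subseteq> {1..m} \<Longrightarrow> finite X \<Longrightarrow> card (X \<inter> (\<Union>i\<in>S. A i)) = (\<Sum>i\<in>S. card (X \<inter> A i))"
proof -
  assume S: "S \<subseteq> {1..m}" and X: "finite X"
  have "X \<inter> (\<Union>i\<in>S. A i) = (\<Union>i\<in>S. X \<inter> A i)" by blast
  moreover have "card (\<Union>i\<in>S. X \<inter> A i) = (\<Sum>i\<in>S. card (X \<inter> A i))"
  proof (rule card_UN_disjoint)
    show "finite S" using S by (rule finite_subset) simp
    show "\<forall>i\<in>S. finite (X \<inter> A i)" using X by simp
    show "\<forall>i\<in>S. \<forall>j\<in>S. i \<noteq> j \<longrightarrow> (X \<inter> A i) \<inter> (X \<inter> A j) = {}"
    proof (intro ballI impI)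
      fix i j assume "i \<in> S" "j \<in> S" "i \<noteq> j"
      then have "A i \<inter> A j = {}" using AA_disj S by (meson subsetD)
      then show "(X \<inter> A i) \<inter> (X \<inter> A j) = {}" by blast
    qed
  qed
  ultimately show ?thesis by simp
qed

lemma cardUB: "S \<subseteq> {1..m} \<Longrightarrow> finite X \<Longrightarrow> card (X \<inter> (\<Union>i\<in>S. B i)) = (\<Sum>i\<in>S. card (X \<inter> B i))"
proof -
  assume S: "S \<subseteq> {1..m}" and X: "finite X"
  have "X \<inter> (\<Union>i\<in>S. B i) = (\<Union>i\<in>S. X \<inter> B i)" by blast
  moreover have "card (\<Union>i\<in>S. X \<inter> B i) = (\<Sum>i\<in>S. card (X \<inter> B i))"
  proof (rule card_UN_disjoint)
    show "finite S" using S by (rule finite_subset) simp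
    show "\<forall>i\<in>S. finite (X \<inter> B i)" using X by simp
    show "\<forall>i\<in>S. \<forall>j\<in>S. i \<noteq> j \<longrightarrow> (X \<inter> B i) \<inter> (X \<inter> B j) = {}"
    proof (intro ballI impI)
      fix i j assume "i \<in> S" "j \<in> S" "i \<noteq> j"
      then have "B i \<inter> B j = {}" using BB_disj S by (meson subsetD)
      then show "(X \<inter> B i) \<inter> (X \<inter> B j) = {}" by blast
    qed
  qed
  ultimately show ?thesis by simp
qed

lemma ab_le_c: "X \<in> P \<Longrightarrow> (\<Sum>i=1..m. a X i) + (\<Sum>i=1..m. b X i) \<le> c X"
proof -
  assume X: "X \<in> P"
  let ?S1 = "X \<inter> (\<Union>i\<in>{1..m}. A i)" and ?S2 = "X \<inter> (\<Union>i\<in>{1..m}. B i)"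
  have "card ?S1 + card ?S2 = card (?S1 \<union> ?S2)"
  proof (rule card_Un_disjoint[symmetric])
    show "finite ?S1" "finite ?S2" using P_fin X by auto
    have "\<forall>i\<in>{1..m}. \<forall>j\<in>{1..m}. A i \<inter> B j = {}" using AB_disj by blast
    then show "?S1 \<inter> ?S2 = {}" by blast
  qed
  also have "\<dots> \<le> card X" by (rule card_mono) (use P_fin X in auto)
  finally have "card ?S1 + card ?S2 \<le> card X" .
  then have "(\<Sum>i=1..m. card (X \<inter> A i)) + (\<Sum>i=1..m. card (X \<inter> B i)) \<le> card X"
    using cardUA[of "{1..m}" X] cardUB[of "{1..m}" X] P_fin X by simp
  then show ?thesis unfolding a_def b_def c_def by (metis of_nat_add of_nat_le_iff of_nat_sum)
qed

end

context blow begin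

lemma D_sym: "D X Y = D Y X"
  unfolding D_def by (rule sum.cong) (auto simp: algebra_simps)

lemma D_nonneg: "0 \<le> D X Y"
  unfolding D_def by (intro sum_nonneg) (simp add: a_nonneg b_nonneg)

lemma D_row: "X \<in> P \<Longrightarrow> D X Y \<le> n * c X"
proof -
  assume X: "X \<in> P"
  have "D X Y \<le> (\<Sum>i=1..m. a X i * n + b X i * n)"
    unfolding D_def by (rule sum_mono) (auto intro!: add_mono mult_left_mono a_le b_le a_nonneg b_nonneg)
  also have "\<dots> = n * ((\<Sum>i=1..m. a X i) + (\<Sum>i=1..m. b X i))"
    by (simp add: sum.distrib sum_distrib_left algebra_simps)
  also have "\<dots> \<le> n * c X" using ab_le_c[OF X] by (simp add: mult_left_mono)
  finally show ?thesis .
qed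

lemma Q_fin: "X \<in> P \<Longrightarrow> Y \<in> P \<Longrightarrow> finite (Qs X Y)"
proof -
  assume "X \<in> P" "Y \<in> P"
  then have "finite (X \<times> Y)" using P_fin by simp
  moreover have "Qs X Y \<subseteq> X \<times> Y" unfolding Qs_def by auto
  ultimately show ?thesis by (rule finite_subset[rotated])
qed

lemma D_le_Q: "X \<in> P \<Longrightarrow> Y \<in> P \<Longrightarrow> D X Y \<le> real (card (Qs X Y))"
proof -
  assume X: "X \<in> P" and Y: "Y \<in> P"
  define T1 where "T1 = (\<Union>i\<in>{1..m}. (X \<inter> A i) \<times> (Y \<inter> B i))"
  define T2 where "T2 = (\<Union>i\<in>{1..m}. (X \<inter> B i) \<times> (Y \<inter> A i))"
  have fX: "finite X" and fY: "finite Y" using X Y P_fin by auto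
  have c1: "card T1 = (\<Sum>i=1..m. card (X \<inter> A i) * card (Y \<inter> B i))"
    unfolding T1_def
  proof (subst card_UN_disjoint)
    show "finite {1..m}" by simp
    show "\<forall>i\<in>{1..m}. finite ((X \<inter> A i) \<times> (Y \<inter> B i))" using fX fY by simp
    show "\<forall>i\<in>{1..m}. \<forall>j\<in>{1..m}. i \<noteq> j \<longrightarrow> (X \<inter> A i) \<times> (Y \<inter> B i) \<inter> (X \<inter> A j) \<times> (Y \<inter> B j) = {}"
    proof (intro ballI impI)
      fix i j assume "i \<in> {1..m}" "j \<in> {1..m}" "i \<noteq> j"
      then have "A i \<inter> A j = {}" using AA_disj by blast
      then show "(X \<inter> A i) \<times> (Y \<inter> B i) \<inter> (X \<inter> A j) \<times> (Y \<inter> B j) = {}" by blast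
    qed
  qed (simp add: card_cartesian_product)
  have c2: "card T2 = (\<Sum>i=1..m. card (X \<inter> B i) * card (Y \<inter> A i))"
    unfolding T2_def
  proof (subst card_UN_disjoint)
    show "finite {1..m}" by simp
    show "\<forall>i\<in>{1..m}. finite ((X \<inter> B i) \<times> (Y \<inter> A i))" using fX fY by simp
    show "\<forall>i\<in>{1..m}. \<forall>j\<in>{1..m}. i \<noteq> j \<longrightarrow> (X \<inter> B i) \<times> (Y \<inter> A i) \<inter> (X \<inter> B j) \<times> (Y \<inter> A j) = {}"
    proof (intro ballI impI)
      fix i j assume "i \<in> {1..m}" "j \<in> {1..m}" "i \<noteq> j"
      then have "B i \<inter> B j = {}" using BB_disj by blast
      then show "(X \<inter> B i) \<times> (Y \<inter> A i) \<inter> (X \<inter> B j) \<times> (Y \<inter> A j) = {}" by blast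
    qed
  qed (simp add: card_cartesian_product)
  have fT1: "finite T1" unfolding T1_def using fX fY by auto
  have fT2: "finite T2" unfolding T2_def using fX fY by auto
  have d12: "T1 \<inter> T2 = {}"
  proof -
    have "\<forall>i\<in>{1..m}. \<forall>j\<in>{1..m}. A i \<inter> B j = {}" using AB_disj by blast
    then show ?thesis unfolding T1_def T2_def by blast
  qed
  have sub: "T1 \<union> T2 \<subseteq> Qs X Y"
  proof
    fix p assume "p \<in> T1 \<union> T2"
    then obtain x y where p: "p = (x, y)" by (cases p)
    show "p \<in> Qs X Y"
    proof (cases "p \<in> T1")
      case True
      then obtain i where i: "i \<in> {1..m}" "x \<in> X" "x \<in> A i" "y \<in> Y" "y \<in> B i" unfolding T1_def p by auto
      then have "{x, y} \<in> E \<longleftrightarrow> tau" using edgeAB[of i i x y] tauprop by auto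
      then show ?thesis unfolding Qs_def p using i by auto
    next
      case False
      then have "p \<in> T2" using \<open>p \<in> T1 \<union> T2\<close> by auto
      then obtain i where i: "i \<in> {1..m}" "x \<in> X" "x \<in> B i" "y \<in> Y" "y \<in> A i" unfolding T2_def p by auto
      then have "{y, x} \<in> E \<longleftrightarrow> tau" using edgeAB[of i i y x] tauprop by auto
      then have "{x, y} \<in> E \<longleftrightarrow> tau" by (simp add: insert_commute)
      then show ?thesis unfolding Qs_def p using i by auto
    qed
  qed
  have "card T1 + card T2 = card (T1 \<union> T2)" using card_Un_disjoint[OF fT1 fT2 d12] by simp
  also have "\<dots> \<le> card (Qs X Y)" by (rule card_mono[OF Q_fin[OF X Y] sub])
  finally have "card T1 + card T2 \<le> card (Qs X Y)" .
  then have "real (card T1) + real (card T2) \<le> real (card (Qs X Y))" by linarith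
  moreover have "D X Y = real (card T1) + real (card T2)"
    unfolding D_def c1 c2 a_def b_def by (simp add: sum.distrib mult.commute)
  ultimately show ?thesis by simp
qed

end

context blow begin

lemma witness:
  assumes X: "X \<in> P" and Y: "Y \<in> P" and r: "R X Y" and h: "h \<in> {1..m}" and l: "l \<in> {1..m}" and lh: "l < h"
    and sa: "eps * c X \<le> (\<Sum>i=h..m. a X i)" and sb: "eps * c Y \<le> (\<Sum>j=1..l. b Y j)"
  shows "real (card (Qs X Y)) \<le> eps * c X * c Y"
proof -
  define X' where "X' = X \<inter> (\<Union>i\<in>{h..m}. A i)"
  define Y' where "Y' = Y \<inter> (\<Union>j\<in>{1..l}. B j)"
  have fX: "finite X" and fY: "finite Y" using X Y P_fin by auto
  have cX': "real (card X') = (\<Sum>i=h..m. a X i)"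
    unfolding X'_def a_def using cardUA[of "{h..m}" X] h fX by (simp add: subset_eq)
  have cY': "real (card Y') = (\<Sum>j=1..l. b Y j)"
    unfolding Y'_def b_def using cardUB[of "{1..l}" Y] l fY by (simp add: subset_eq)
  have cXp: "c X > 0" "c Y > 0" using c_pos X Y by auto
  have "eps * c X > 0" "eps * c Y > 0" using eps_pos cXp by auto
  then have pX': "real (card X') > 0" and pY': "real (card Y') > 0" using cX' sa cY' sb by linarith+
  have "\<bar>density E X Y - density E X' Y'\<bar> \<le> eps"
    using r unfolding R_def regular_pair_def c_def
    using sa sb cX' cY' unfolding X'_def Y'_def c_def by auto
  note reg = this
  have hom: "\<forall>x\<in>X'. \<forall>y\<in>Y'. ({x, y} \<in> E \<longleftrightarrow> \<not> tau)"
  proof (intro ballI)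
    fix x y assume "x \<in> X'" "y \<in> Y'"
    then obtain i j where ij: "i \<in> {h..m}" "x \<in> A i" "j \<in> {1..l}" "y \<in> B j" unfolding X'_def Y'_def by auto
    then have "i \<in> {1..m}" "j \<in> {1..m}" "j < i" using h l lh by auto
    then show "{x, y} \<in> E \<longleftrightarrow> \<not> tau" using edgeAB[of i j x y] tauprop ij by auto
  qed
  define Ed where "Ed S T = {(x, y). x \<in> S \<and> y \<in> T \<and> {x, y} \<in> E}" for S T
  have dens: "density E S T = real (card (Ed S T)) / (real (card S) * real (card T))" for S T
    unfolding density_def Ed_def by simp
  have EdXY_sub: "Ed X Y \<subseteq> X \<times> Y" unfolding Ed_def by auto
  have fEd: "finite (Ed X Y)" using EdXY_sub fX fY finite_subset by blast
  have cXY: "c X * c Y > 0" using cXp by simp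
  show ?thesis
  proof (cases tau)
    case True
    then have "Ed X' Y' = {}" using hom unfolding Ed_def by auto
    then have "density E X' Y' = 0" using dens by simp
    then have "density E X Y \<le> eps" using reg by simp
    then have "real (card (Ed X Y)) / (c X * c Y) \<le> eps" using dens unfolding c_def by simp
    then have "real (card (Ed X Y)) \<le> eps * (c X * c Y)" using cXY by (simp add: divide_le_eq)
    moreover have "Qs X Y = Ed X Y" unfolding Qs_def Ed_def using True by simp
    ultimately show ?thesis by (simp add: mult.assoc)
  next
    case False
    then have "Ed X' Y' = X' \<times> Y'" using hom unfolding Ed_def by auto
    then have "density E X' Y' = 1" using dens pX' pY' by (simp add: card_cartesian_product)
    then have "density E X Y \<ge> 1 - eps" using reg by simp
    then have "real (card (Ed X Y)) / (c X * c Y) \<ge> 1 - eps" using dens unfolding c_def by simp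
    then have ge: "real (card (Ed X Y)) \<ge> (1 - eps) * (c X * c Y)" using cXY by (simp add: le_divide_eq)
    have "Qs X Y = X \<times> Y - Ed X Y" unfolding Qs_def Ed_def using False by auto
    then have "card (Qs X Y) = card (X \<times> Y) - card (Ed X Y)"
      using card_Diff_subset[OF fEd EdXY_sub] by simp
    then have "real (card (Qs X Y)) = c X * c Y - real (card (Ed X Y))"
      using card_mono[OF finite_cartesian_product[OF fX fY] EdXY_sub]
      unfolding c_def by (simp add: card_cartesian_product of_nat_diff)
    then show ?thesis using ge by (simp add: algebra_simps)
  qed
qed

lemma e_nonneg: "0 \<le> e X Y" unfolding e_def by (simp add: a_nonneg b_nonneg)

lemma half_bound:
  assumes X: "X \<in> P" and Y: "Y \<in> P" and r: "R X Y"
  shows "D X Y \<le> eps * c X * c Y \<or> (\<Sum>i=1..m. a X i * b Y i) \<le> n * (eps * c X) + n * (eps * c Y) + e X Y"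
proof (cases "\<exists>h\<in>{1..m}. \<exists>l\<in>{1..m}. l < h \<and> eps * c X \<le> (\<Sum>i=h..m. a X i) \<and> eps * c Y \<le> (\<Sum>j=1..l. b Y j)")
  case True
  then obtain h l where "h\<in>{1..m}" "l\<in>{1..m}" "l < h" "eps * c X \<le> (\<Sum>i=h..m. a X i)" "eps * c Y \<le> (\<Sum>j=1..l. b Y j)"
    by blast
  then have "real (card (Qs X Y)) \<le> eps * c X * c Y" using witness X Y r by blast
  then show ?thesis using D_le_Q[OF X Y] by simp
next
  case False
  have "(\<Sum>i=1..m. a X i * b Y i) \<le> n * (eps * c X) + n * (eps * c Y) +
     (if (\<exists>h\<in>{1..m}. eps * c X \<le> (\<Sum>i=h..m. a X i))
      then a X (GREATEST h. h\<in>{1..m} \<and> eps * c X \<le> (\<Sum>i=h..m. a X i)) * b Y (GREATEST h. h\<in>{1..m} \<and> eps * c X \<le> (\<Sum>i=h..m. a X i))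
      else 0)"
  proof (rule quant)
    show "\<forall>i\<in>{1..m}. 0 \<le> a X i \<and> a X i \<le> real n \<and> 0 \<le> b Y i \<and> b Y i \<le> real n"
      using a_nonneg b_nonneg a_le b_le by auto
    show "0 < eps * c X" using eps_pos c_pos X by auto
    show "0 \<le> eps * c Y" using eps_pos c_pos[OF Y] by simp
    show "0 \<le> real n" by simp
    show "\<not> (\<exists>h\<in>{1..m}. \<exists>l\<in>{1..m}. l < h \<and> eps * c X \<le> sum (a X) {h..m} \<and> eps * c Y \<le> sum (b Y) {1..l})"
      using False by simp
  qed
  then show ?thesis unfolding e_def hex_def hq_def by simp
qed

lemma reg_bound:
  assumes X: "X \<in> P" and Y: "Y \<in> P" and r: "R X Y"
  shows "D X Y \<le> eps * c X * c Y + 2 * eps * n * (c X + c Y) + e X Y + e Y X"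
proof -
  have r': "R Y X" using r regular_pair_sym unfolding R_def by blast
  have DD: "D X Y = (\<Sum>i=1..m. a X i * b Y i) + (\<Sum>i=1..m. a Y i * b X i)"
    unfolding D_def by (simp add: sum.distrib mult.commute)
  have ee: "0 \<le> e X Y" "0 \<le> e Y X" using e_nonneg by auto
  have cc: "0 \<le> c X" "0 \<le> c Y" using c_pos X Y by (auto intro: less_imp_le)
  have nn: "0 \<le> 2 * eps * n * (c X + c Y)" using eps_pos cc by simp
  note h1 = half_bound[OF X Y r] and h2 = half_bound[OF Y X r']
  show ?thesis
  proof (cases "D X Y \<le> eps * c X * c Y \<or> D Y X \<le> eps * c Y * c X")
    case True
    then have "D X Y \<le> eps * c X * c Y" using D_sym by (auto simp: mult.commute mult.left_commute)
    then show ?thesis using ee nn by linarith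
  next
    case False
    then have "(\<Sum>i=1..m. a X i * b Y i) \<le> n * (eps * c X) + n * (eps * c Y) + e X Y"
      "(\<Sum>i=1..m. a Y i * b X i) \<le> n * (eps * c Y) + n * (eps * c X) + e Y X" using h1 h2 by auto
    moreover have "0 \<le> eps * c X * c Y" using eps_pos cc by simp
    ultimately show ?thesis unfolding DD by (simp add: algebra_simps)
  qed
qed

lemma irr_bound:
  assumes X: "X \<in> P" and Y: "Y \<in> P"
  shows "D X Y \<le> c X * c Y / 2 + (if c X < 2 * real n then D X Y else 0) + (if c Y < 2 * real n then D X Y else 0)"
proof (cases "c X < 2 * real n \<or> c Y < 2 * real n")
  case True
  then show ?thesis using D_nonneg[of X Y] c_pos[OF X] c_pos[OF Y]
    by (auto simp: mult_pos_pos less_imp_le)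
next
  case False
  have "D X Y \<le> n * c X" by (rule D_row[OF X])
  also have "\<dots> \<le> c X * c Y / 2" using False c_pos[OF X]
    by (simp add: algebra_simps)
  finally show ?thesis using False by simp
qed

end

context blow begin

abbreviation "k \<equiv> real (card P)"
abbreviation "NN \<equiv> 2 * real m * real n"

lemma S_D: "(\<Sum>X\<in>P. \<Sum>Y\<in>P. D X Y) = 2 * real m * real n ^ 2"
proof -
  have "(\<Sum>X\<in>P. \<Sum>Y\<in>P. D X Y) = (\<Sum>X\<in>P. \<Sum>i=1..m. \<Sum>Y\<in>P. a X i * b Y i + b X i * a Y i)"
    unfolding D_def by (rule sum.cong[OF refl], rule sum.swap)
  also have "\<dots> = (\<Sum>i=1..m. \<Sum>X\<in>P. \<Sum>Y\<in>P. a X i * b Y i + b X i * a Y i)"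
    by (rule sum.swap)
  also have "\<dots> = (\<Sum>i=1..m. 2 * real n ^ 2)"
  proof (rule sum.cong[OF refl])
    fix i assume i: "i \<in> {1..m}"
    have "(\<Sum>X\<in>P. \<Sum>Y\<in>P. a X i * b Y i + b X i * a Y i) = (\<Sum>X\<in>P. a X i * (\<Sum>Y\<in>P. b Y i) + b X i * (\<Sum>Y\<in>P. a Y i))"
      by (simp add: sum.distrib sum_distrib_left)
    also have "\<dots> = (\<Sum>X\<in>P. a X i * n + b X i * n)" using sum_a[OF i] sum_b[OF i] by simp
    also have "\<dots> = (\<Sum>X\<in>P. a X i) * n + (\<Sum>X\<in>P. b X i) * n" by (simp add: sum.distrib sum_distrib_right)
    also have "\<dots> = 2 * real n ^ 2" using sum_a[OF i] sum_b[OF i] by (simp add: power2_eq_square)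
    finally show "(\<Sum>X\<in>P. \<Sum>Y\<in>P. a X i * b Y i + b X i * a Y i) = 2 * real n ^ 2" .
  qed
  also have "\<dots> = 2 * real m * real n ^ 2" by simp
  finally show ?thesis .
qed

lemma S_row: "X \<in> P \<Longrightarrow> (\<Sum>Y\<in>P. D X Y) \<le> n * c X"
proof -
  assume X: "X \<in> P"
  have "(\<Sum>Y\<in>P. D X Y) = (\<Sum>i=1..m. \<Sum>Y\<in>P. a X i * b Y i + b X i * a Y i)"
    unfolding D_def by (rule sum.swap)
  also have "\<dots> = (\<Sum>i=1..m. a X i * n + b X i * n)"
  proof (rule sum.cong[OF refl])
    fix i assume i: "i \<in> {1..m}"
    show "(\<Sum>Y\<in>P. a X i * b Y i + b X i * a Y i) = a X i * n + b X i * n"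
      using sum_a[OF i] sum_b[OF i] by (simp add: sum.distrib sum_distrib_left[symmetric])
  qed
  also have "\<dots> = n * ((\<Sum>i=1..m. a X i) + (\<Sum>i=1..m. b X i))"
    by (simp add: sum.distrib sum_distrib_left algebra_simps)
  also have "\<dots> \<le> n * c X" using ab_le_c[OF X] by (simp add: mult_left_mono)
  finally show ?thesis .
qed

lemma S_col: "Y \<in> P \<Longrightarrow> (\<Sum>X\<in>P. D X Y) \<le> n * c Y"
  using S_row[of Y] D_sym by simp

lemma hq_in: "hex X \<Longrightarrow> hq X \<in> {1..m}"
proof -
  assume "hex X"
  then have ex: "\<exists>k. k\<in>{1..m} \<and> eps * c X \<le> (\<Sum>i=k..m. a X i)" unfolding hex_def by blast
  have bnd: "\<And>y. y\<in>{1..m} \<and> eps * c X \<le> (\<Sum>i=y..m. a X i) \<Longrightarrow> y \<le> m" by simp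
  have "hq X \<in> {1..m} \<and> eps * c X \<le> (\<Sum>i=hq X..m. a X i)"
    unfolding hq_def by (rule GreatestI_ex_nat[OF ex bnd])
  then show ?thesis by simp
qed

lemma S_e_row: "(\<Sum>Y\<in>P. e X Y) \<le> real n ^ 2"
proof (cases "hex X")
  case True
  have "(\<Sum>Y\<in>P. e X Y) = a X (hq X) * (\<Sum>Y\<in>P. b Y (hq X))"
    unfolding e_def using True by (simp add: sum_distrib_left)
  also have "\<dots> = a X (hq X) * n" using sum_b[OF hq_in[OF True]] by simp
  also have "\<dots> \<le> n * n" using a_le[OF hq_in[OF True]] by (simp add: mult_right_mono)
  finally show ?thesis by (simp add: power2_eq_square)
next
  case False
  then show ?thesis unfolding e_def by simp
qed

lemma S_e1: "(\<Sum>X\<in>P. \<Sum>Y\<in>P. e X Y) \<le> k * real n ^ 2"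
proof -
  have "(\<Sum>X\<in>P. \<Sum>Y\<in>P. e X Y) \<le> (\<Sum>X\<in>P. real n ^ 2)" by (rule sum_mono) (rule S_e_row)
  then show ?thesis by simp
qed

lemma S_e2: "(\<Sum>X\<in>P. \<Sum>Y\<in>P. e Y X) \<le> k * real n ^ 2"
proof -
  have "(\<Sum>X\<in>P. \<Sum>Y\<in>P. e Y X) = (\<Sum>Y\<in>P. \<Sum>X\<in>P. e Y X)" by (rule sum.swap)
  then show ?thesis using S_e1 by simp
qed

lemma S_c: "(\<Sum>X\<in>P. \<Sum>Y\<in>P. c X + c Y) = 2 * k * NN"
proof -
  have "(\<Sum>X\<in>P. \<Sum>Y\<in>P. c X + c Y) = (\<Sum>X\<in>P. k * c X + NN)"
    by (rule sum.cong[OF refl]) (simp add: sum.distrib sum_c)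
  also have "\<dots> = k * (\<Sum>X\<in>P. c X) + k * NN" by (simp add: sum.distrib sum_distrib_left)
  finally show ?thesis using sum_c by simp
qed

lemma S_cc: "(\<Sum>X\<in>P. \<Sum>Y\<in>P. c X * c Y) = NN ^ 2"
  by (simp add: sum_distrib_left[symmetric] sum_distrib_right[symmetric] sum_c power2_eq_square)

lemma S_small1: "(\<Sum>X\<in>P. \<Sum>Y\<in>P. (if c X < 2 * real n then D X Y else 0)) \<le> k * (2 * real n ^ 2)"
proof -
  have "(\<Sum>X\<in>P. \<Sum>Y\<in>P. (if c X < 2 * real n then D X Y else 0)) = (\<Sum>X\<in>P. (if c X < 2 * real n then (\<Sum>Y\<in>P. D X Y) else 0))"
    by (rule sum.cong[OF refl]) simp
  also have "\<dots> \<le> (\<Sum>X\<in>P. 2 * real n ^ 2)"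
  proof (rule sum_mono)
    fix X assume X: "X \<in> P"
    show "(if c X < 2 * real n then (\<Sum>Y\<in>P. D X Y) else 0) \<le> 2 * real n ^ 2"
    proof (cases "c X < 2 * real n")
      case True
      have "(\<Sum>Y\<in>P. D X Y) \<le> n * c X" by (rule S_row[OF X])
      also have "\<dots> \<le> real n * (2 * real n)" using True by (intro mult_left_mono) auto
      finally show ?thesis using True by (simp add: power2_eq_square)
    qed simp
  qed
  finally show ?thesis by simp
qed

lemma S_small2: "(\<Sum>X\<in>P. \<Sum>Y\<in>P. (if c Y < 2 * real n then D X Y else 0)) \<le> k * (2 * real n ^ 2)"
proof -
  have "(\<Sum>X\<in>P. \<Sum>Y\<in>P. (if c Y < 2 * real n then D X Y else 0)) = (\<Sum>Y\<in>P. \<Sum>X\<in>P. (if c Y < 2 * real n then D X Y else 0))"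
    by (rule sum.swap)
  also have "\<dots> = (\<Sum>Y\<in>P. (if c Y < 2 * real n then (\<Sum>X\<in>P. D X Y) else 0))"
    by (rule sum.cong[OF refl]) simp
  also have "\<dots> \<le> (\<Sum>Y\<in>P. 2 * real n ^ 2)"
  proof (rule sum_mono)
    fix Y assume Y: "Y \<in> P"
    show "(if c Y < 2 * real n then (\<Sum>X\<in>P. D X Y) else 0) \<le> 2 * real n ^ 2"
    proof (cases "c Y < 2 * real n")
      case True
      have "(\<Sum>X\<in>P. D X Y) \<le> n * c Y" by (rule S_col[OF Y])
      also have "\<dots> \<le> real n * (2 * real n)" using True by (intro mult_left_mono) auto
      finally show ?thesis using True by (simp add: power2_eq_square)
    qed simp
  qed
  finally show ?thesis by simp
qed

end

context blow begin

lemma S_irr: "(\<Sum>X\<in>P. \<Sum>Y\<in>P. (if R X Y then 0 else c X * c Y)) \<le> eps * NN ^ 2"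
proof -
  define G where "G = {(x, y). x \<in> V \<and> y \<in> V \<and> (\<exists>X\<in>P. \<exists>Y\<in>P. x \<in> X \<and> y \<in> Y \<and> regular_pair E eps X Y)}"
  have Gge: "real (card G) \<ge> (1 - eps) * real (card V) ^ 2"
    using regp unfolding regular_partition_def G_def by simp
  have Geq: "G = (\<Union>X\<in>P. \<Union>Y\<in>{Y\<in>P. R X Y}. X \<times> Y)"
    unfolding G_def R_def using P_sub by blast
  have cardG: "card G = (\<Sum>X\<in>P. \<Sum>Y\<in>{Y\<in>P. R X Y}. card X * card Y)"
    unfolding Geq
  proof (subst card_UN_disjoint)
    show "finite P" by (rule finP)
    show "\<forall>X\<in>P. finite (\<Union>Y\<in>{Y\<in>P. R X Y}. X \<times> Y)" using finP P_fin by auto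
    show "\<forall>X\<in>P. \<forall>X'\<in>P. X \<noteq> X' \<longrightarrow> (\<Union>Y\<in>{Y\<in>P. R X Y}. X \<times> Y) \<inter> (\<Union>Y\<in>{Y\<in>P. R X' Y}. X' \<times> Y) = {}"
      using P_disj by blast
    show "(\<Sum>X\<in>P. card (\<Union>Y\<in>{Y\<in>P. R X Y}. X \<times> Y)) = (\<Sum>X\<in>P. \<Sum>Y\<in>{Y\<in>P. R X Y}. card X * card Y)"
    proof (rule sum.cong[OF refl])
      fix X assume X: "X \<in> P"
      show "card (\<Union>Y\<in>{Y\<in>P. R X Y}. X \<times> Y) = (\<Sum>Y\<in>{Y\<in>P. R X Y}. card X * card Y)"
      proof (subst card_UN_disjoint)
        show "finite {Y\<in>P. R X Y}" using finP by simp
        show "\<forall>Y\<in>{Y\<in>P. R X Y}. finite (X \<times> Y)" using X P_fin by auto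
        show "\<forall>Y\<in>{Y\<in>P. R X Y}. \<forall>Y'\<in>{Y\<in>P. R X Y}. Y \<noteq> Y' \<longrightarrow> X \<times> Y \<inter> X \<times> Y' = {}"
          using P_disj by blast
      qed (simp add: card_cartesian_product)
    qed
  qed
  have "real (card G) = (\<Sum>X\<in>P. \<Sum>Y\<in>{Y\<in>P. R X Y}. c X * c Y)"
    unfolding cardG c_def by simp
  also have "\<dots> = (\<Sum>X\<in>P. \<Sum>Y\<in>P. (if R X Y then c X * c Y else 0))"
    using finP by (simp add: sum.inter_filter)
  finally have G2: "real (card G) = (\<Sum>X\<in>P. \<Sum>Y\<in>P. (if R X Y then c X * c Y else 0))" .
  have split: "(\<Sum>X\<in>P. \<Sum>Y\<in>P. (if R X Y then 0 else c X * c Y)) = (\<Sum>X\<in>P. \<Sum>Y\<in>P. c X * c Y) - (\<Sum>X\<in>P. \<Sum>Y\<in>P. (if R X Y then c X * c Y else 0))"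
    by (simp add: sum_subtractf[symmetric] if_distrib) (rule sum.cong, auto intro: sum.cong)
  have cV: "real (card V) = NN" using cardV by simp
  show ?thesis using split G2 Gge S_cc cV by (simp add: algebra_simps)
qed

lemma main_ineq: "real m \<le> 16 * k"
proof -
  define F where "F X Y = (if R X Y then eps * c X * c Y else c X * c Y / 2) + 2 * eps * n * (c X + c Y) + e X Y + e Y X
      + (if c X < 2 * real n then D X Y else 0) + (if c Y < 2 * real n then D X Y else 0)" for X Y
  have per: "D X Y \<le> F X Y" if X: "X \<in> P" and Y: "Y \<in> P" for X Y
  proof (cases "R X Y")
    case True
    have "D X Y \<le> eps * c X * c Y + 2 * eps * n * (c X + c Y) + e X Y + e Y X" by (rule reg_bound[OF X Y True])
    moreover have "0 \<le> (if c X < 2 * real n then D X Y else 0)" "0 \<le> (if c Y < 2 * real n then D X Y else 0)"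
      using D_nonneg by auto
    ultimately show ?thesis unfolding F_def using True by simp
  next
    case False
    have "D X Y \<le> c X * c Y / 2 + (if c X < 2 * real n then D X Y else 0) + (if c Y < 2 * real n then D X Y else 0)"
      by (rule irr_bound[OF X Y])
    moreover have "0 \<le> e X Y" "0 \<le> e Y X" using e_nonneg by auto
    moreover have "0 \<le> 2 * eps * n * (c X + c Y)" using eps_pos c_pos[OF X] c_pos[OF Y] by simp
    ultimately show ?thesis unfolding F_def using False by simp
  qed
  have chain: "2 * real m * real n ^ 2 \<le> (\<Sum>X\<in>P. \<Sum>Y\<in>P. F X Y)"
  proof -
    have "(\<Sum>X\<in>P. \<Sum>Y\<in>P. D X Y) \<le> (\<Sum>X\<in>P. \<Sum>Y\<in>P. F X Y)" by (intro sum_mono per)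
    then show ?thesis using S_D by simp
  qed
  have Fs: "F X Y = (eps * c X * c Y + (1/2 - eps) * (if R X Y then 0 else c X * c Y))
      + 2 * eps * n * (c X + c Y) + e X Y + e Y X
      + (if c X < 2 * real n then D X Y else 0) + (if c Y < 2 * real n then D X Y else 0)" for X Y
    unfolding F_def by (simp add: algebra_simps)
  have Fsplit: "(\<Sum>X\<in>P. \<Sum>Y\<in>P. F X Y) = (\<Sum>X\<in>P. \<Sum>Y\<in>P. eps * c X * c Y + (1/2 - eps) * (if R X Y then 0 else c X * c Y))
      + (\<Sum>X\<in>P. \<Sum>Y\<in>P. 2 * eps * n * (c X + c Y))
      + (\<Sum>X\<in>P. \<Sum>Y\<in>P. e X Y) + (\<Sum>X\<in>P. \<Sum>Y\<in>P. e Y X)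
      + (\<Sum>X\<in>P. \<Sum>Y\<in>P. (if c X < 2 * real n then D X Y else 0))
      + (\<Sum>X\<in>P. \<Sum>Y\<in>P. (if c Y < 2 * real n then D X Y else 0))"
    unfolding Fs by (simp only: sum.distrib)
  have T1: "(\<Sum>X\<in>P. \<Sum>Y\<in>P. eps * c X * c Y + (1/2 - eps) * (if R X Y then 0 else c X * c Y))
      = eps * NN ^ 2 + (1/2 - eps) * (\<Sum>X\<in>P. \<Sum>Y\<in>P. (if R X Y then 0 else c X * c Y))"
  proof -
    have "(\<Sum>X\<in>P. \<Sum>Y\<in>P. eps * c X * c Y + (1/2 - eps) * (if R X Y then 0 else c X * c Y))
      = (\<Sum>X\<in>P. \<Sum>Y\<in>P. eps * (c X * c Y)) + (\<Sum>X\<in>P. \<Sum>Y\<in>P. (1/2 - eps) * (if R X Y then 0 else c X * c Y))"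
      by (simp only: sum.distrib mult.assoc)
    also have "\<dots> = eps * (\<Sum>X\<in>P. \<Sum>Y\<in>P. c X * c Y) + (1/2 - eps) * (\<Sum>X\<in>P. \<Sum>Y\<in>P. (if R X Y then 0 else c X * c Y))"
      by (simp only: sum_distrib_left)
    finally show ?thesis using S_cc by simp
  qed
  have cterm: "(\<Sum>X\<in>P. \<Sum>Y\<in>P. 2 * eps * n * (c X + c Y)) = 2 * eps * n * (2 * k * NN)"
  proof -
    have "(\<Sum>X\<in>P. \<Sum>Y\<in>P. 2 * eps * n * (c X + c Y)) = 2 * eps * n * (\<Sum>X\<in>P. \<Sum>Y\<in>P. (c X + c Y))"
      by (simp only: sum_distrib_left)
    then show ?thesis using S_c by simp
  qed
  have ineq: "2 * real m * real n ^ 2 \<le> eps * NN ^ 2 + (1/2 - eps) * (\<Sum>X\<in>P. \<Sum>Y\<in>P. (if R X Y then 0 else c X * c Y))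
      + 2 * eps * n * (2 * k * NN) + k * real n ^ 2 + k * real n ^ 2 + k * (2 * real n ^ 2) + k * (2 * real n ^ 2)"
    using chain Fsplit T1 cterm S_e1 S_e2 S_small1 S_small2 by linarith
  have em: "eps * real m = 1/4" using epsm by simp
  have "eps * 1 \<le> eps * real m" using eps_pos m1 by (intro mult_left_mono) auto
  then have eps14: "eps \<le> 1/4" using em by simp
  have "(1/2 - eps) * (\<Sum>X\<in>P. \<Sum>Y\<in>P. (if R X Y then 0 else c X * c Y)) \<le> (1/2 - eps) * (eps * NN ^ 2)"
    using S_irr eps14 by (intro mult_left_mono) auto
  also have "\<dots> \<le> 1/2 * (eps * NN ^ 2)" using eps_pos by (intro mult_right_mono) auto
  finally have ineq2: "2 * real m * real n ^ 2 \<le> 3/2 * (eps * NN ^ 2)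
      + 2 * eps * n * (2 * k * NN) + 6 * k * real n ^ 2" using ineq by linarith
  have t1: "eps * NN ^ 2 = real m * real n ^ 2"
  proof -
    have "eps * NN ^ 2 = 4 * (eps * real m) * (real m * real n ^ 2)" by (simp add: power2_eq_square algebra_simps)
    then show ?thesis using em by simp
  qed
  have t2: "2 * eps * n * (2 * k * NN) = 2 * k * real n ^ 2"
  proof -
    have "2 * eps * n * (2 * k * NN) = 8 * (eps * real m) * k * real n ^ 2" by (simp add: power2_eq_square algebra_simps)
    then show ?thesis using em by simp
  qed
  have "2 * real m * real n ^ 2 \<le> 3/2 * (real m * real n ^ 2) + 8 * k * real n ^ 2"
    using ineq2 t1 t2 by linarith
  then have "real m * real n ^ 2 \<le> (16 * k) * real n ^ 2" by linarith
  moreover have "real n ^ 2 > 0" using n1 by simp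
  ultimately show ?thesis using mult_le_cancel_right_pos by blast
qed

end


lemma tau_exists:
  assumes "EH \<in> Irr m"
  shows "\<exists>tau. \<forall>i\<in>{1..m}. \<forall>j\<in>{1..m}. (i = j \<longrightarrow> ({Inl i, Inr j} \<in> EH \<longleftrightarrow> tau))
          \<and> (j < i \<longrightarrow> ({Inl i, Inr j} \<in> EH \<longleftrightarrow> \<not> tau))"
proof -
  have "(\<forall>i\<in>{1..m}. \<forall>j\<in>{1..m}. {Inl i, Inr j} \<in> EH \<longleftrightarrow> i \<le> j) \<or>
      (\<forall>i\<in>{1..m}. \<forall>j\<in>{1..m}. {Inl i, Inr j} \<in> EH \<longleftrightarrow> i = j) \<or>
      (\<forall>i\<in>{1..m}. \<forall>j\<in>{1..m}. {Inl i, Inr j} \<in> EH \<longleftrightarrow> i \<noteq> j)"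
    using assms unfolding Irr_def by blast
  then show ?thesis
  proof (elim disjE)
    assume H: "\<forall>i\<in>{1..m}. \<forall>j\<in>{1..m}. {Inl i, Inr j} \<in> EH \<longleftrightarrow> i \<le> j"
    show ?thesis by (rule exI[of _ True]) (use H in auto)
  next
    assume H: "\<forall>i\<in>{1..m}. \<forall>j\<in>{1..m}. {Inl i, Inr j} \<in> EH \<longleftrightarrow> i = j"
    show ?thesis by (rule exI[of _ True]) (use H in auto)
  next
    assume H: "\<forall>i\<in>{1..m}. \<forall>j\<in>{1..m}. {Inl i, Inr j} \<in> EH \<longleftrightarrow> i \<noteq> j"
    show ?thesis by (rule exI[of _ False]) (use H in auto)
  qed
qed

lemma final_bound:
  fixes eps s2 :: real
  assumes s2: "s2 < 1" and e: "0 < eps" "eps < (1/64) powr (1 / (1 - s2))"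
  shows "eps powr (- s2) \<le> 1 / (64 * eps)"
proof -
  have p: "1 - s2 > 0" using s2 by simp
  have "eps powr (1 - s2) < ((1/64) powr (1 / (1 - s2))) powr (1 - s2)"
    by (rule powr_less_mono2) (use p e in auto)
  also have "\<dots> = (1/64) powr ((1 / (1 - s2)) * (1 - s2))" by (simp add: powr_powr)
  also have "\<dots> = 1/64" using p by simp
  finally have lt: "eps powr (1 - s2) < 1/64" .
  have ex: "(1 - s2) + (-1) = - s2" by simp
  have m1: "eps powr (-1) = 1 / eps"
    using powr_minus_divide[of eps 1] e by simp
  have "eps powr (- s2) = eps powr (1 - s2) * eps powr (-1)"
    using powr_add[of eps "1 - s2" "-1"] ex by metis
  also have "\<dots> = eps powr (1 - s2) / eps" using m1 by simp
  also have "\<dots> \<le> (1/64) / eps" using lt e by (intro divide_right_mono) auto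
  finally show ?thesis by simp
qed

theorem lemma3p31:
  fixes s1 s2 :: real
  assumes "0 < s1" "s1 < 1 - s1" "1 - s1 < s2" "s2 < 1"
  shows "\<exists>eps0 > 0. \<forall>eps. 0 < eps \<and> eps < eps0 \<longrightarrow>
           (\<forall>m :: nat. real m = 1 / (4 * eps) \<longrightarrow>
             (\<exists>n0 :: nat. \<forall>n \<ge> n0. \<forall>EH \<in> Irr m. \<forall>(V :: 'v set) E.
                is_blowup n (irr_vertices m) EH V E \<longrightarrow>
                (\<forall>P. regular_partition V E eps P \<longrightarrow> real (card P) \<ge> eps powr (- s2))))"
proof (intro exI[of _ "(1/64) powr (1 / (1 - s2))"] conjI allI impI)
  show "0 < (1/64 :: real) powr (1 / (1 - s2))" by simp
  fix eps :: real and m :: nat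
  assume e: "0 < eps \<and> eps < (1/64) powr (1 / (1 - s2))" and mdef: "real m = 1 / (4 * eps)"
  show "\<exists>n0 :: nat. \<forall>n \<ge> n0. \<forall>EH \<in> Irr m. \<forall>(V :: 'v set) E.
                is_blowup n (irr_vertices m) EH V E \<longrightarrow>
                (\<forall>P. regular_partition V E eps P \<longrightarrow> real (card P) \<ge> eps powr (- s2))"
  proof (intro exI[of _ 1] allI impI ballI)
    fix n :: nat and EH and V :: "'v set" and E P
    assume n: "1 \<le> n" and EH: "EH \<in> Irr m" and bl: "is_blowup n (irr_vertices m) EH V E"
      and rp: "regular_partition V E eps P"
    have epsm: "4 * eps * real m = 1" using mdef e by (simp add: field_simps)
    have mpos: "real m > 0" using mdef e by simp
    then have m1: "m \<ge> 1" by simp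
    obtain tau where tau: "\<forall>i\<in>{1..m}. \<forall>j\<in>{1..m}. (i = j \<longrightarrow> ({Inl i, Inr j} \<in> EH \<longleftrightarrow> tau))
          \<and> (j < i \<longrightarrow> ({Inl i, Inr j} \<in> EH \<longleftrightarrow> \<not> tau))" using tau_exists[OF EH] by blast
    obtain part :: "nat + nat \<Rightarrow> 'v set" where
      p1: "\<forall>u\<in>irr_vertices m. card (part u) = n" and
      p2: "\<forall>u\<in>irr_vertices m. \<forall>u'\<in>irr_vertices m. u \<noteq> u' \<longrightarrow> part u \<inter> part u' = {}" and
      p3: "V = (\<Union>u\<in>irr_vertices m. part u)" and
      p4: "\<forall>u\<in>irr_vertices m. \<forall>u'\<in>irr_vertices m. u \<noteq> u' \<longrightarrow>
           (\<forall>x\<in>part u. \<forall>y\<in>part u'. {x, y} \<in> E \<longleftrightarrow> {u, u'} \<in> EH)"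
      using bl unfolding is_blowup_def by blast
    have "blow m n eps part V E EH P tau"
      by (unfold_locales) (use m1 epsm n p1 p2 p3 p4 tau rp in auto)
    then have "real m \<le> 16 * real (card P)" by (rule blow.main_ineq)
    then have "1 / (64 * eps) \<le> real (card P)" using mdef e by (simp add: field_simps)
    moreover have "eps powr (- s2) \<le> 1 / (64 * eps)"
      by (rule final_bound) (use assms e in auto)
    ultimately show "real (card P) \<ge> eps powr (- s2)" by linarith
  qed
qed

end
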